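(* For every $\rho>0$ there exists $\epsilon>0$ such that for all $x=x_0+x_1\mathbf e_1+x_2\mathbf e_2+x_3\mathbf e_3\in\mathbb H$ with $x_0^2+x_j^2<\epsilon$ for $j=1,2,3$, one has $|P_n(x)|<\rho^n$ for every $n\in\mathbb N$.
   Context: For $m\ge0$, $T^m_j=\frac{2(m-j+1)}{(m+1)(m+2)}$ ($0\le j\le m$), $c_m=\sum_{j=0}^m(-1)^jT^m_j$, and $P_m(x)=\frac1{c_m}\sum_{j=0}^mT^m_jx^{m-j}\overline{x}^{\,j}$, where $\overline{x}=x_0-x_1\mathbf e_1-x_2\mathbf e_2-x_3\mathbf e_3$ is the quaternionic conjugate. *)

theory Defs
  imports Complex_Main
begin

text \<open>Real quaternions x = x0 + x1 e1 + x2 e2 + x3 e3, with e1^2 = e2^2 = e3^2 = -1,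
  e1 e2 = e3, e2 e3 = e1, e3 e1 = e2 (Hamilton product).\<close>

datatype quat = Quat (Re0: real) (Im1: real) (Im2: real) (Im3: real)

definition qmult :: "quat \<Rightarrow> quat \<Rightarrow> quat" where
  "qmult p q = Quat
     (Re0 p * Re0 q - Im1 p * Im1 q - Im2 p * Im2 q - Im3 p * Im3 q)
     (Re0 p * Im1 q + Im1 p * Re0 q + Im2 p * Im3 q - Im3 p * Im2 q)
     (Re0 p * Im2 q - Im1 p * Im3 q + Im2 p * Re0 q + Im3 p * Im1 q)
     (Re0 p * Im3 q + Im1 p * Im2 q - Im2 p * Im1 q + Im3 p * Re0 q)"

definition qone :: quat where "qone = Quat 1 0 0 0"
definition qzero :: quat where "qzero = Quat 0 0 0 0"

definition qadd :: "quat \<Rightarrow> quat \<Rightarrow> quat" where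
  "qadd p q = Quat (Re0 p + Re0 q) (Im1 p + Im1 q) (Im2 p + Im2 q) (Im3 p + Im3 q)"

definition qscale :: "real \<Rightarrow> quat \<Rightarrow> quat" where
  "qscale r q = Quat (r * Re0 q) (r * Im1 q) (r * Im2 q) (r * Im3 q)"

fun qpow :: "quat \<Rightarrow> nat \<Rightarrow> quat" where
  "qpow x 0 = qone"
| "qpow x (Suc n) = qmult (qpow x n) x"

definition qconj :: "quat \<Rightarrow> quat" where
  "qconj x = Quat (Re0 x) (- Im1 x) (- Im2 x) (- Im3 x)"

definition qnorm :: "quat \<Rightarrow> real" where
  "qnorm x = sqrt ((Re0 x)^2 + (Im1 x)^2 + (Im2 x)^2 + (Im3 x)^2)"

definition qsum :: "(nat \<Rightarrow> quat) \<Rightarrow> nat \<Rightarrow> quat" where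
  "qsum f m = foldr (\<lambda>j acc. qadd (f j) acc) [0..<Suc m] qzero"

definition T :: "nat \<Rightarrow> nat \<Rightarrow> real" where
  "T m j = 2 * (real m - real j + 1) / ((real m + 1) * (real m + 2))"

definition c :: "nat \<Rightarrow> real" where
  "c m = (\<Sum>j = 0..m. (-1) ^ j * T m j)"

definition P :: "nat \<Rightarrow> quat \<Rightarrow> quat" where
  "P m x = qscale (1 / c m)
     (qsum (\<lambda>j. qscale (T m j) (qmult (qpow x (m - j)) (qpow (qconj x) j))) m)"

end

theory Submission
  imports Defs "HOL-Analysis.Product_Vector"
begin

definition qv :: "quat \<Rightarrow> real \<times> real \<times> real \<times> real" where
  "qv p = (Re0 p, Im1 p, Im2 p, Im3 p)"

lemma qnorm_qv: "qnorm p = norm (qv p)"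
  by (simp add: qnorm_def qv_def norm_Pair add.assoc)

lemma qv_add: "qv (qadd p q) = qv p + qv q"
  by (simp add: qv_def qadd_def)

lemma qnorm_add: "qnorm (qadd p q) \<le> qnorm p + qnorm q"
  by (simp add: qnorm_qv qv_add norm_triangle_ineq)

lemma qnorm_nonneg: "qnorm p \<ge> 0"
  by (simp add: qnorm_def)

lemma sq_mult: "(Re0 (qmult p q))^2 + (Im1 (qmult p q))^2 + (Im2 (qmult p q))^2 + (Im3 (qmult p q))^2
  = ((Re0 p)^2 + (Im1 p)^2 + (Im2 p)^2 + (Im3 p)^2) * ((Re0 q)^2 + (Im1 q)^2 + (Im2 q)^2 + (Im3 q)^2)"
  by (simp add: qmult_def power2_eq_square algebra_simps)

lemma qnorm_mult: "qnorm (qmult p q) = qnorm p * qnorm q"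
  unfolding qnorm_def sq_mult by (simp add: real_sqrt_mult)

lemma qnorm_pow: "qnorm (qpow x n) = qnorm x ^ n"
proof (induction n)
  case 0 then show ?case by (simp add: qone_def qnorm_def)
next
  case (Suc n) then show ?case by (simp only: qpow.simps qnorm_mult) simp
qed

lemma qnorm_conj: "qnorm (qconj x) = qnorm x"
  by (simp add: qnorm_def qconj_def)

lemma qnorm_scale: "qnorm (qscale r q) = \<bar>r\<bar> * qnorm q"
proof -
  have "(r * Re0 q)\<^sup>2 + (r * Im1 q)\<^sup>2 + (r * Im2 q)\<^sup>2 + (r * Im3 q)\<^sup>2
     = r^2 * ((Re0 q)\<^sup>2 + (Im1 q)\<^sup>2 + (Im2 q)\<^sup>2 + (Im3 q)\<^sup>2)"
    by (simp add: power_mult_distrib algebra_simps)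
  then show ?thesis by (simp add: qnorm_def qscale_def real_sqrt_mult)
qed

lemma qnorm_foldr: "qnorm (foldr (\<lambda>j acc. qadd (f j) acc) xs qzero) \<le> sum_list (map (\<lambda>j. qnorm (f j)) xs)"
proof (induction xs)
  case Nil then show ?case by (simp add: qnorm_def qzero_def)
next
  case (Cons a xs)
  then show ?case using qnorm_add[of "f a" "foldr (\<lambda>j acc. qadd (f j) acc) xs qzero"] by simp
qed

lemma qnorm_qsum: "qnorm (qsum f m) \<le> (\<Sum>j\<in>{0..m}. qnorm (f j))"
proof -
  have "(\<Sum>j\<in>{0..m}. qnorm (f j)) = sum_list (map (\<lambda>j. qnorm (f j)) [0..<Suc m])"
    by (metis atLeastLessThanSuc_atLeastAtMost set_upt sum_set_upt_conv_sum_list_nat)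
  then show ?thesis using qnorm_foldr[of f "[0..<Suc m]"] by (simp add: qsum_def)
qed

lemma neg_shift: "(\<Sum>j = 0..m. (-1::real) ^ Suc j * (real (Suc m) - real (Suc j) + 1)) = - (\<Sum>j = 0..m. (-1) ^ j * (real m - real j + 1))"
proof -
  have "\<And>j. (-1::real)^Suc j * (real (Suc m) - real (Suc j) + 1) = - ((-1)^j * (real m - real j + 1))" by simp
  then show ?thesis by (simp only: sum_negf[symmetric])
qed

lemma frac_cancel: "2 * (real m + 1) / ((real m + 1) * (real m + 2)) = 2 / (real m + 2)"
  by (metis mult.commute nonzero_mult_divide_mult_cancel_left of_nat_Suc of_nat_neq_0 add.commute)

definition A :: "nat \<Rightarrow> real" where
  "A m = (\<Sum>j = 0..m. (-1) ^ j * (real m - real j + 1))"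

lemma A_rec: "A (Suc m) = real m + 2 - A m"
proof -
  have "A (Suc m) = (-1) ^ 0 * (real (Suc m) - real 0 + 1) + (\<Sum>j = 0..m. (-1) ^ Suc j * (real (Suc m) - real (Suc j) + 1))"
    unfolding A_def by (subst sum.atLeast0_atMost_Suc_shift) (simp only: comp_def)
  also have "(-1::real) ^ 0 * (real (Suc m) - real 0 + 1) = real m + 2" by simp
  also have "(\<Sum>j = 0..m. (-1) ^ Suc j * (real (Suc m) - real (Suc j) + 1)) = - A m"
    unfolding A_def by (rule neg_shift)
  finally show ?thesis by simp
qed

lemma A_closed: "A m = (real m + 1) / 2 + (if even m then 1/2 else 0)"
proof (induction m)
  case 0 then show ?case by (simp add: A_def)
next
  case (Suc m) then show ?case by (simp add: A_rec field_simps)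
qed

lemma c_eq: "c m = 2 * A m / ((real m + 1) * (real m + 2))"
  unfolding c_def A_def T_def by (simp add: sum_distrib_left sum_divide_distrib algebra_simps)

lemma c_ge: "c m \<ge> 1 / (real m + 2)"
proof -
  have "A m \<ge> (real m + 1) / 2" by (simp add: A_closed)
  then have "2 * A m / ((real m + 1) * (real m + 2)) \<ge> (real m + 1) / ((real m + 1) * (real m + 2))"
    by (intro divide_right_mono) auto
  then show ?thesis by (simp add: c_eq)
qed

lemma T_nonneg: "j \<le> m \<Longrightarrow> T m j \<ge> 0"
  by (simp add: T_def)

lemma T_le: "j \<le> m \<Longrightarrow> T m j \<le> 2 / (real m + 2)"
proof -
  assume "j \<le> m"
  have "2 * (real m - real j + 1) \<le> 2 * (real m + 1)" by simp
  then have "T m j \<le> 2 * (real m + 1) / ((real m + 1) * (real m + 2))"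
    unfolding T_def by (intro divide_right_mono) auto
  moreover have "2 * (real m + 1) / ((real m + 1) * (real m + 2)) = 2 / (real m + 2)"
    by (rule frac_cancel)
  ultimately show ?thesis by simp
qed

lemma P_bound: "qnorm (P n x) \<le> 2 * (real n + 2) * qnorm x ^ n"
proof -
  have cpos: "c n > 0" using c_ge[of n] by (smt (verit) divide_pos_pos of_nat_0_le_iff)
  define S where "S = (\<Sum>j\<in>{0..n}. qnorm (qscale (T n j) (qmult (qpow x (n - j)) (qpow (qconj x) j))))"
  have S1: "S = (\<Sum>j\<in>{0..n}. T n j * qnorm x ^ n)"
    unfolding S_def
  proof (rule sum.cong)
    fix j assume "j \<in> {0..n}"
    then have "j \<le> n" by simp
    then show "qnorm (qscale (T n j) (qmult (qpow x (n - j)) (qpow (qconj x) j))) = T n j * qnorm x ^ n"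
      by (simp add: qnorm_scale qnorm_mult qnorm_pow qnorm_conj T_nonneg power_add[symmetric])
  qed simp
  have S2: "(\<Sum>j\<in>{0..n}. T n j * qnorm x ^ n) \<le> (\<Sum>j\<in>{0..n}. 2 / (real n + 2) * qnorm x ^ n)"
    by (intro sum_mono mult_right_mono T_le) (auto simp: qnorm_nonneg)
  have S3: "(\<Sum>j\<in>{0..n}. 2 / (real n + 2) * qnorm x ^ n) = (real n + 1) * (2 / (real n + 2)) * qnorm x ^ n"
    by simp
  have "(real n + 1) * (2 / (real n + 2)) \<le> 2" by (simp add: field_simps)
  then have S4: "(real n + 1) * (2 / (real n + 2)) * qnorm x ^ n \<le> 2 * qnorm x ^ n"
    by (intro mult_right_mono) (auto simp: qnorm_nonneg)
  have S: "S \<le> 2 * qnorm x ^ n" using S1 S2 S3 S4 by linarith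
  have e: "qnorm (P n x) = (1 / c n) * qnorm (qsum (\<lambda>j. qscale (T n j) (qmult (qpow x (n - j)) (qpow (qconj x) j))) n)"
    using cpos by (simp add: P_def qnorm_scale)
  have "qnorm (qsum (\<lambda>j. qscale (T n j) (qmult (qpow x (n - j)) (qpow (qconj x) j))) n) \<le> S"
    unfolding S_def by (rule qnorm_qsum)
  with S have "qnorm (qsum (\<lambda>j. qscale (T n j) (qmult (qpow x (n - j)) (qpow (qconj x) j))) n) \<le> 2 * qnorm x ^ n"
    by linarith
  then have "qnorm (P n x) \<le> (1 / c n) * (2 * qnorm x ^ n)"
    unfolding e using cpos by (intro mult_left_mono) auto
  also have "\<dots> \<le> (real n + 2) * (2 * qnorm x ^ n)"
  proof (intro mult_right_mono)
    have "1 / c n \<le> 1 / (1 / (real n + 2))" using c_ge[of n] cpos by (intro divide_left_mono) auto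
    then show "1 / c n \<le> real n + 2" by simp
  qed (auto simp: qnorm_nonneg)
  also have "\<dots> = 2 * (real n + 2) * qnorm x ^ n" by simp
  finally show ?thesis .
qed

lemma eight_pow: "n \<ge> 1 \<Longrightarrow> 2 * (real n + 2) < 8 ^ n"
proof (induction n rule: dec_induct)
  case base then show ?case by simp
next
  case (step n)
  then show ?case by simp
qed

theorem mainTheorem5:
  fixes \<rho> :: real
  assumes "\<rho> > 0"
  shows "\<exists>\<epsilon>>0. \<forall>x::quat.
           ((Re0 x)^2 + (Im1 x)^2 < \<epsilon> \<and> (Re0 x)^2 + (Im2 x)^2 < \<epsilon> \<and>
            (Re0 x)^2 + (Im3 x)^2 < \<epsilon>) \<longrightarrow>
           (\<forall>n::nat. n \<ge> 1 \<longrightarrow> qnorm (P n x) < \<rho> ^ n)"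
proof (intro exI[of _ "(\<rho>/8)^2/3"] conjI allI impI)
  show "(\<rho>/8)^2/3 > 0" using assms by simp
  fix x :: quat and n :: nat
  assume h: "(Re0 x)^2 + (Im1 x)^2 < (\<rho>/8)^2/3 \<and> (Re0 x)^2 + (Im2 x)^2 < (\<rho>/8)^2/3 \<and>
            (Re0 x)^2 + (Im3 x)^2 < (\<rho>/8)^2/3" and n: "n \<ge> 1"
  have q2: "(qnorm x)^2 \<le> (\<rho>/8)^2"
    using h by (simp add: qnorm_def) (smt (verit) zero_le_power2)
  have r8: "0 \<le> \<rho>/8" using assms by simp
  have r: "qnorm x \<le> \<rho>/8" by (rule power2_le_imp_le[OF q2 r8])
  have "qnorm (P n x) \<le> 2 * (real n + 2) * qnorm x ^ n" by (rule P_bound)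
  also have "\<dots> \<le> 2 * (real n + 2) * (\<rho>/8) ^ n"
    by (intro mult_left_mono power_mono r qnorm_nonneg) auto
  also have "\<dots> < 8 ^ n * (\<rho>/8) ^ n"
    using eight_pow[OF n] assms by (intro mult_strict_right_mono) auto
  also have "\<dots> = \<rho> ^ n" by (simp add: power_mult_distrib[symmetric])
  finally show "qnorm (P n x) < \<rho> ^ n" .
qed

end
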